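(* Let $f:[-1,1]\to\mathbb{R}$ be continuous, let $n\geq 0$, and let $\underline{c}=(c_0,\ldots,c_n)^\top\in\mathbb{R}^{n+1}$. Define $L[\underline{c}]=(\mu_0,\ldots,\mu_n)^\top$ by \[ \mu_i=\int_{-1}^1\operatorname{sign}\!\Big(f(x)-\sum_{j=0}^n c_jU_j(x)\Big)U_i(x)\,dx,\qquad 0\leq i\leq n. \] If $M:=\tfrac{2}{\pi}(n+2)^2\max_{0\leq i\leq n}|\mu_i|<1$, then \[ \Big\|f-\sum_{j=0}^n c_jU_j\Big\|_1\leq\frac{1}{1-M}\,\|f-p_n^{L_1}\|_1, \] where $p_n^{L_1}$ is the best $L_1$ polynomial approximant of degree $\leq n$ to $f$.
   Context: $U_j$ is the Chebyshev polynomial of the second kind of degree $j$. $\operatorname{sign}(y)$ equals $1$ for $y>0$, $0$ for $y=0$, $-1$ for $y<0$. $\|g\|_1=\int_{-1}^1|g(x)|\,dx$, and $p_n^{L_1}$ is the (unique) real polynomial of degree $\leq n$ minimizing $\|f-q\|_1$. *)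

theory Defs
  imports "HOL-Analysis.Analysis" "HOL-Computational_Algebra.Polynomial"
begin

fun chebU :: "nat \<Rightarrow> real \<Rightarrow> real" where
  "chebU 0 x = 1"
| "chebU (Suc 0) x = 2 * x"
| "chebU (Suc (Suc j)) x = 2 * x * chebU (Suc j) x - chebU j x"

definition L1norm :: "(real \<Rightarrow> real) \<Rightarrow> real" where
  "L1norm g = integral {-1..1} (\<lambda>x. \<bar>g x\<bar>)"

definition chebU_sum :: "nat \<Rightarrow> (nat \<Rightarrow> real) \<Rightarrow> real \<Rightarrow> real" where
  "chebU_sum n c x = (\<Sum>j\<le>n. c j * chebU j x)"

definition Lmu :: "(real \<Rightarrow> real) \<Rightarrow> nat \<Rightarrow> (nat \<Rightarrow> real) \<Rightarrow> nat \<Rightarrow> real" where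
  "Lmu f n c i = integral {-1..1} (\<lambda>x. sgn (f x - chebU_sum n c x) * chebU i x)"

definition best_L1_approx :: "(real \<Rightarrow> real) \<Rightarrow> nat \<Rightarrow> real poly \<Rightarrow> bool" where
  "best_L1_approx f n p \<longleftrightarrow> degree p \<le> n \<and>
     (\<forall>q::real poly. degree q \<le> n \<longrightarrow> L1norm (\<lambda>x. f x - poly p x) \<le> L1norm (\<lambda>x. f x - poly q x))"

end

theory Submission
  imports Defs
begin

lemma nat_induct012: "P 0 \<Longrightarrow> P (Suc 0) \<Longrightarrow> (\<And>j. P j \<Longrightarrow> P (Suc j) \<Longrightarrow> P (Suc (Suc j))) \<Longrightarrow> P (n::nat)"
  by (induction n rule: less_induct) (metis less_Suc_eq not0_implies_Suc)

lemma chebU_cos: "chebU j (cos t) * sin t = sin ((real j + 1) * t)"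
proof (induction j rule: nat_induct012)
  case 1 then show ?case by simp
next
  case 2 then show ?case by (simp add: sin_double)
next
  case (3 j)
  have e: "sin ((real j + 3) * t) + sin ((real j + 1) * t) = 2 * cos t * sin ((real j + 2) * t)"
  proof -
    have "sin ((real j + 3) * t) = sin ((real j + 2) * t + t)" by (simp add: algebra_simps)
    moreover have "sin ((real j + 1) * t) = sin ((real j + 2) * t - t)" by (simp add: algebra_simps)
    ultimately show ?thesis by (simp add: sin_add sin_diff)
  qed
  have "chebU (Suc (Suc j)) (cos t) * sin t = 2 * cos t * (chebU (Suc j) (cos t) * sin t) - chebU j (cos t) * sin t"
    by (simp add: algebra_simps)
  also have "\<dots> = 2 * cos t * sin ((real j + 2) * t) - sin ((real j + 1) * t)"
    using 3 by (simp add: add.commute)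
  also have "\<dots> = sin ((real (Suc (Suc j)) + 1) * t)" using e by (simp add: algebra_simps)
  finally show ?case .
qed

lemma chebU_cont: "continuous_on S (chebU j)"
  by (induction j rule: nat_induct012) (auto intro!: continuous_intros)

lemma sgn_integrable:
  fixes e g :: "real \<Rightarrow> real"
  assumes e: "continuous_on {-1..1} e" and g: "continuous_on {-1..1} g"
  shows "(\<lambda>x. sgn (e x) * g x) integrable_on {-1..1}"
proof (rule measurable_bounded_by_integrable_imp_integrable_real[where g="\<lambda>x. \<bar>g x\<bar>"])
  have em: "e \<in> borel_measurable (lebesgue_on {-1..1})"
    by (rule continuous_imp_measurable_on_sets_lebesgue[OF e]) auto
  have gm: "g \<in> borel_measurable (lebesgue_on {-1..1})"
    by (rule continuous_imp_measurable_on_sets_lebesgue[OF g]) auto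
  show "(\<lambda>x. sgn (e x) * g x) \<in> borel_measurable (lebesgue_on {-1..1})"
    using em gm by measurable
  show "(\<lambda>x. \<bar>g x\<bar>) integrable_on {-1..1}"
    by (intro integrable_continuous_interval continuous_intros g)
  show "\<bar>sgn (e x) * g x\<bar> \<le> \<bar>g x\<bar>" for x
    by (auto simp: abs_mult sgn_real_def)
qed auto


lemma sin_int_pi: "sin (of_int m * pi) = 0"
  by (metis mult.commute sin_npi_int)

lemma orth_sin:
  fixes j k :: nat
  shows "((\<lambda>t. sin ((real k + 1) * t) * sin ((real j + 1) * t)) has_integral
          (if k = j then pi / 2 else 0)) {0..pi}"
proof (cases "k = j")
  case True
  define a where "a = real k + 1"
  have a: "a > 0" by (simp add: a_def)
  define F where "F t = t / 2 - sin (2 * a * t) / (4 * a)" for t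
  have d: "(F has_vector_derivative (sin (a * t) * sin (a * t))) (at t within {0..pi})" for t
  proof -
    have "(F has_real_derivative (1/2 - cos (2 * a * t) * (2 * a) / (4 * a))) (at t within {0..pi})"
      unfolding F_def by (auto intro!: derivative_eq_intros)
    moreover have "1/2 - cos (2 * a * t) * (2 * a) / (4 * a) = sin (a * t) * sin (a * t)"
    proof -
      have "cos (2 * a * t) = 1 - 2 * (sin (a * t))^2"
        using cos_double_sin[of "a * t"] by (simp add: mult.assoc)
      then show ?thesis using a by (simp add: power2_eq_square field_simps)
    qed
    ultimately show ?thesis by (simp add: has_real_derivative_iff_has_vector_derivative)
  qed
  have "sin (2 * a * pi) = 0"
    using sin_int_pi[of "2 * (int k + 1)"] by (simp add: a_def)
  then have "F pi - F 0 = pi / 2" by (simp add: F_def)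
  moreover have "((\<lambda>t. sin (a * t) * sin (a * t)) has_integral (F pi - F 0)) {0..pi}"
    by (rule fundamental_theorem_of_calculus) (use d in auto)
  ultimately have "((\<lambda>t. sin (a * t) * sin (a * t)) has_integral (pi / 2)) {0..pi}" by metis
  then show ?thesis using True by (simp add: a_def)
next
  case False
  define a where "a = real k + 1"
  define b where "b = real j + 1"
  have ab: "a - b \<noteq> 0" "a + b \<noteq> 0" using False by (auto simp: a_def b_def)
  define F where "F t = sin ((a - b) * t) / (2 * (a - b)) - sin ((a + b) * t) / (2 * (a + b))" for t
  have d: "(F has_vector_derivative (sin (a * t) * sin (b * t))) (at t within {0..pi})" for t
  proof -
    have "(F has_real_derivative (cos ((a - b) * t) * (a - b) / (2 * (a - b)) - cos ((a + b) * t) * (a + b) / (2 * (a + b)))) (at t within {0..pi})"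
      unfolding F_def using ab by (auto intro!: derivative_eq_intros)
    moreover have "cos ((a - b) * t) * (a - b) / (2 * (a - b)) - cos ((a + b) * t) * (a + b) / (2 * (a + b))
        = (cos (a * t - b * t) - cos (a * t + b * t)) / 2"
    proof -
      have g: "\<And>x y::real. y \<noteq> 0 \<Longrightarrow> x * y / (2*y) = x/2" by simp
      have 1: "cos ((a - b) * t) * (a - b) / (2 * (a - b)) = cos (a * t - b * t) / 2"
        unfolding g[OF ab(1)] by (simp add: left_diff_distrib)
      have 2: "cos ((a + b) * t) * (a + b) / (2 * (a + b)) = cos (a * t + b * t) / 2"
        unfolding g[OF ab(2)] by (simp add: distrib_right)
      show ?thesis unfolding 1 2 by (simp add: diff_divide_distrib)
    qed
    moreover have "(cos (a * t - b * t) - cos (a * t + b * t)) / 2 = sin (a * t) * sin (b * t)"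
      by (simp add: cos_diff cos_add)
    ultimately show ?thesis by (simp add: has_real_derivative_iff_has_vector_derivative)
  qed
  have "sin ((a - b) * pi) = 0"
    using sin_int_pi[of "int k - int j"] by (simp add: a_def b_def)
  moreover have "sin ((a + b) * pi) = 0"
    using sin_int_pi[of "int k + int j + 2"] by (simp add: a_def b_def add.commute add.left_commute)
  ultimately have "F pi - F 0 = 0" by (simp add: F_def)
  moreover have "((\<lambda>t. sin (a * t) * sin (b * t)) has_integral (F pi - F 0)) {0..pi}"
    by (rule fundamental_theorem_of_calculus) (use d in auto)
  ultimately show ?thesis using False by (simp add: a_def b_def)
qed

lemma subst_cos:
  fixes g :: "real \<Rightarrow> real"
  assumes g: "continuous_on {-1..1} g"
  shows "((\<lambda>t. sin t * g (cos t)) has_integral integral {-1..1} g) {0..pi}"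
proof -
  have "((\<lambda>t. (- sin t) *\<^sub>R g (cos t)) has_integral (integral {cos 0..cos pi} g - integral {cos pi..cos 0} g)) {0..pi}"
    by (rule has_integral_substitution_general[of "{}"]) (auto intro!: derivative_eq_intros continuous_intros g)
  then have "((\<lambda>t. - (sin t * g (cos t))) has_integral (- integral {-1..1} g)) {0..pi}"
    by simp
  then show ?thesis using has_integral_neg_iff[of "\<lambda>t. sin t * g (cos t)"] by simp
qed


fun Upoly :: "nat \<Rightarrow> real poly" where
  "Upoly 0 = 1"
| "Upoly (Suc 0) = [:0, 2:]"
| "Upoly (Suc (Suc j)) = [:0, 2:] * Upoly (Suc j) - Upoly j"

lemma poly_Upoly: "poly (Upoly j) x = chebU j x"
  by (induction j rule: nat_induct012) auto

lemma Upoly_deg: "degree (Upoly j) \<le> j \<and> coeff (Upoly j) j = 2 ^ j"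
proof (induction j rule: nat_induct012)
  case (3 j)
  have d1: "degree ([:0, 2:] * Upoly (Suc j)) \<le> Suc (Suc j)"
    using degree_mult_le[of "[:0, 2:]" "Upoly (Suc j)"] 3 by simp
  have d2: "degree (Upoly j) \<le> Suc (Suc j)" using 3 by simp
  have "degree (Upoly (Suc (Suc j))) \<le> Suc (Suc j)"
    using degree_diff_le[OF d1 d2] by simp
  moreover have "coeff (Upoly j) (Suc (Suc j)) = 0"
    using 3 by (intro coeff_eq_0) auto
  moreover have "coeff ([:0, 2:] * Upoly (Suc j)) (Suc (Suc j)) = 2 * 2 ^ Suc j"
    using 3 by (simp add: mult_pCons_left)
  ultimately show ?case by simp
qed auto

lemma Ubasis: "degree (q::real poly) \<le> n \<Longrightarrow> \<exists>a. \<forall>x. poly q x = (\<Sum>j\<le>n. a j * chebU j x)"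
proof (induction n arbitrary: q)
  case 0
  then show ?case by (intro exI[of _ "\<lambda>_. coeff q 0"]) (auto elim!: degree_eq_zeroE)
next
  case (Suc n)
  define b where "b = coeff q (Suc n) / 2 ^ Suc n"
  define q' where "q' = q - smult b (Upoly (Suc n))"
  have "degree q' \<le> Suc n" unfolding q'_def
    using Suc.prems Upoly_deg[of "Suc n"] by (intro degree_diff_le) (auto intro: order.trans[OF degree_smult_le])
  moreover have "coeff q' (Suc n) = 0" unfolding q'_def b_def using Upoly_deg[of "Suc n"] by simp
  ultimately have "degree q' \<le> n"
  proof (rule_tac ccontr)
    assume a1: "degree q' \<le> Suc n" "coeff q' (Suc n) = 0" "\<not> degree q' \<le> n"
    then have "degree q' = Suc n" by simp
    then have "coeff q' (degree q') = 0" using a1(2) by metis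
    then have "q' = 0" using leading_coeff_0_iff by blast
    then show False using a1 by simp
  qed
  then obtain a where a: "\<forall>x. poly q' x = (\<Sum>j\<le>n. a j * chebU j x)" using Suc.IH by blast
  show ?case
  proof (intro exI[of _ "a(Suc n := b)"] allI)
    fix x
    have "poly q x = poly q' x + b * chebU (Suc n) x" unfolding q'_def by (simp add: poly_Upoly)
    also have "\<dots> = (\<Sum>j\<le>n. (a(Suc n := b)) j * chebU j x) + b * chebU (Suc n) x"
      using a by simp
    also have "\<dots> = (\<Sum>j\<le>Suc n. (a(Suc n := b)) j * chebU j x)" by simp
    finally show "poly q x = (\<Sum>j\<le>Suc n. (a(Suc n := b)) j * chebU j x)" .
  qed
qed

lemma coeff_bound:
  fixes d :: "nat \<Rightarrow> real" and r :: "real \<Rightarrow> real"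
  assumes r: "\<And>x. r x = (\<Sum>k\<le>n. d k * chebU k x)" and j: "j \<le> n"
  shows "\<bar>d j\<bar> \<le> 2 / pi * integral {-1..1} (\<lambda>x. \<bar>r x\<bar>)"
proof -
  have rc: "continuous_on {-1..1} r"
    unfolding r by (intro continuous_intros chebU_cont)
  have eq: "sin t * r (cos t) * sin ((real j + 1) * t) = (\<Sum>k\<le>n. d k * (sin ((real k + 1) * t) * sin ((real j + 1) * t)))" for t
  proof -
    have "sin t * r (cos t) * sin ((real j + 1) * t) = (\<Sum>k\<le>n. d k * ((chebU k (cos t) * sin t) * sin ((real j + 1) * t)))"
      unfolding r sum_distrib_left sum_distrib_right by (intro sum.cong refl) (simp add: algebra_simps)
    then show ?thesis by (simp only: chebU_cos)
  qed
  have "((\<lambda>t. \<Sum>k\<le>n. d k * (sin ((real k + 1) * t) * sin ((real j + 1) * t))) has_integral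
        (\<Sum>k\<le>n. d k * (if k = j then pi / 2 else 0))) {0..pi}"
    by (intro has_integral_sum has_integral_mult_right orth_sin) auto
  moreover have "(\<Sum>k\<le>n. d k * (if k = j then pi / 2 else 0)) = d j * pi / 2"
    using j by (simp add: if_distrib[of "\<lambda>z. d _ * z"] sum.delta cong: if_cong)
  ultimately have h: "((\<lambda>t. sin t * r (cos t) * sin ((real j + 1) * t)) has_integral d j * pi / 2) {0..pi}"
    unfolding eq by simp
  have ra: "continuous_on {-1..1} (\<lambda>x. \<bar>r x\<bar>)" by (intro continuous_intros rc)
  have I: "((\<lambda>t. sin t * \<bar>r (cos t)\<bar>) has_integral integral {-1..1} (\<lambda>x. \<bar>r x\<bar>)) {0..pi}"
    using subst_cos[OF ra] .
  have b1: "sin t * r (cos t) * sin ((real j + 1) * t) \<le> sin t * \<bar>r (cos t)\<bar>" if "t \<in> {0..pi}" for t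
  proof -
    have "sin t \<ge> 0" using that sin_ge_zero by auto
    then have "sin t * r (cos t) * sin ((real j + 1) * t) \<le> \<bar>sin t * r (cos t) * sin ((real j + 1) * t)\<bar>" by simp
    also have "\<dots> = sin t * \<bar>r (cos t)\<bar> * \<bar>sin ((real j + 1) * t)\<bar>" using \<open>sin t \<ge> 0\<close> by (simp add: abs_mult)
    also have "\<dots> \<le> sin t * \<bar>r (cos t)\<bar> * 1" using \<open>sin t \<ge> 0\<close>
      by (intro mult_left_mono) auto
    finally show ?thesis by simp
  qed
  have b2: "- (sin t * \<bar>r (cos t)\<bar>) \<le> sin t * r (cos t) * sin ((real j + 1) * t)" if "t \<in> {0..pi}" for t
  proof -
    have "sin t \<ge> 0" using that sin_ge_zero by auto
    have "\<bar>sin t * r (cos t) * sin ((real j + 1) * t)\<bar> = sin t * \<bar>r (cos t)\<bar> * \<bar>sin ((real j + 1) * t)\<bar>" using \<open>sin t \<ge> 0\<close> by (simp add: abs_mult)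
    also have "\<dots> \<le> sin t * \<bar>r (cos t)\<bar> * 1" using \<open>sin t \<ge> 0\<close>
      by (intro mult_left_mono) auto
    finally show ?thesis by linarith
  qed
  have u: "d j * pi / 2 \<le> integral {-1..1} (\<lambda>x. \<bar>r x\<bar>)"
    by (rule has_integral_le[OF h I b1])
  have l: "- integral {-1..1} (\<lambda>x. \<bar>r x\<bar>) \<le> d j * pi / 2"
    by (rule has_integral_le[OF has_integral_neg[OF I] h b2])
  have "\<bar>d j\<bar> * pi / 2 \<le> integral {-1..1} (\<lambda>x. \<bar>r x\<bar>)" using u l by (cases "d j \<ge> 0") auto
  then show ?thesis using pi_gt_zero by (simp add: field_simps)
qed


lemma final_arith:
  fixes A E R K M :: real
  assumes "A \<le> E + K * R" "R \<le> E + A" "K \<ge> 0" "2 * K \<le> M" "M < 1" "E \<ge> 0"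
  shows "A \<le> 1 / (1 - M) * E"
proof -
  have "K * R \<le> K * (E + A)" using assms(2,3) by (rule mult_left_mono)
  then have "A \<le> E + K * (E + A)" using assms(1) by linarith
  then have h1: "A * (1 - K) \<le> E * (1 + K)" by (simp add: algebra_simps)
  have K1: "1 - K > 0" using assms by linarith
  have KM0: "K * M \<ge> 0" using assms(3,4) by simp
  have "(1 + K) * (1 - M) = 1 - M + K - K * M" by (simp add: algebra_simps)
  then have "(1 + K) * (1 - M) \<le> 1 - K" using KM0 assms(4) by linarith
  then have h2: "E * (1 + K) * (1 - M) \<le> E * (1 - K)" using assms(6)
    by (metis mult.assoc mult_left_mono)
  have "A * (1 - M) * (1 - K) \<le> E * (1 - K)"
    using mult_right_mono[OF h1, of "1 - M"] h2 assms(5) by (simp add: algebra_simps)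
  then have "A * (1 - M) \<le> E" using K1 by simp
  then show ?thesis using assms(5) by (simp add: field_simps)
qed

theorem theorem5p1:
  fixes f :: "real \<Rightarrow> real" and n :: nat and c :: "nat \<Rightarrow> real" and p :: "real poly"
  assumes "continuous_on {-1..1} f"
    and "best_L1_approx f n p"
    and "2 / pi * (real n + 2)^2 * (MAX i\<in>{0..n}. \<bar>Lmu f n c i\<bar>) < 1"
  shows "L1norm (\<lambda>x. f x - chebU_sum n c x)
    \<le> 1 / (1 - 2 / pi * (real n + 2)^2 * (MAX i\<in>{0..n}. \<bar>Lmu f n c i\<bar>))
       * L1norm (\<lambda>x. f x - poly p x)"
proof -
  define s where "s = chebU_sum n c"
  define e where "e x = f x - s x" for x
  define m where "m = (MAX i\<in>{0..n}. \<bar>Lmu f n c i\<bar>)"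
  define A where "A = L1norm (\<lambda>x. f x - chebU_sum n c x)"
  define E where "E = L1norm (\<lambda>x. f x - poly p x)"
  have degp: "degree p \<le> n" using assms(2) by (simp add: best_L1_approx_def)
  obtain a where a: "\<forall>x. poly p x = (\<Sum>j\<le>n. a j * chebU j x)" using Ubasis[OF degp] by blast
  define d where "d j = a j - c j" for j
  define r where "r x = poly p x - s x" for x
  have r: "r x = (\<Sum>k\<le>n. d k * chebU k x)" for x
    unfolding r_def s_def chebU_sum_def d_def using a by (simp add: sum_subtractf left_diff_distrib)
  have sc: "continuous_on {-1..1} s" unfolding s_def chebU_sum_def
    by (intro continuous_intros chebU_cont)
  have rc: "continuous_on {-1..1} r" unfolding r by (intro continuous_intros chebU_cont)
  have pe: "poly p x = r x + s x" for x by (simp add: r_def)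
  have fc: "continuous_on {-1..1} f" by (rule assms(1))
  have ec: "continuous_on {-1..1} e" unfolding e_def by (intro continuous_intros fc sc)
  have fpc: "continuous_on {-1..1} (\<lambda>x. f x - poly p x)" unfolding pe by (intro continuous_intros fc sc rc)
  have E_int: "(\<lambda>x. \<bar>f x - poly p x\<bar>) integrable_on {-1..1}"
    by (intro integrable_continuous_interval continuous_intros fpc)
  have A_int: "(\<lambda>x. \<bar>e x\<bar>) integrable_on {-1..1}"
    by (intro integrable_continuous_interval continuous_intros ec)
  have R_int: "(\<lambda>x. \<bar>r x\<bar>) integrable_on {-1..1}"
    by (intro integrable_continuous_interval continuous_intros rc)
  have S_int: "(\<lambda>x. sgn (e x) * r x) integrable_on {-1..1}"
    by (rule sgn_integrable[OF ec rc])
  have Sj_int: "(\<lambda>x. sgn (e x) * chebU j x) integrable_on {-1..1}" for j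
    by (rule sgn_integrable[OF ec chebU_cont])
  have Adef: "A = integral {-1..1} (\<lambda>x. \<bar>e x\<bar>)" by (simp add: A_def L1norm_def e_def s_def)
  have Edef: "E = integral {-1..1} (\<lambda>x. \<bar>f x - poly p x\<bar>)" by (simp add: E_def L1norm_def)
  define R where "R = integral {-1..1} (\<lambda>x. \<bar>r x\<bar>)"
  have pw: "\<bar>e x\<bar> \<le> \<bar>f x - poly p x\<bar> + sgn (e x) * r x" for x
  proof -
    have ex: "e x = (f x - poly p x) + r x" by (simp add: e_def pe)
    have "\<bar>e x\<bar> = sgn (e x) * e x" by (simp add: abs_sgn)
    also have "\<dots> = sgn (e x) * (f x - poly p x) + sgn (e x) * r x" by (simp add: ex algebra_simps)
    also have "sgn (e x) * (f x - poly p x) \<le> \<bar>f x - poly p x\<bar>"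
      by (cases "e x > 0"; cases "e x < 0") (auto simp: sgn_real_def)
    finally show ?thesis by simp
  qed
  have step1: "A \<le> E + integral {-1..1} (\<lambda>x. sgn (e x) * r x)"
  proof -
    have "A \<le> integral {-1..1} (\<lambda>x. \<bar>f x - poly p x\<bar> + sgn (e x) * r x)"
      unfolding Adef by (rule integral_le[OF A_int integrable_add[OF E_int S_int]]) (use pw in auto)
    also have "\<dots> = E + integral {-1..1} (\<lambda>x. sgn (e x) * r x)"
      unfolding Edef by (rule integral_add[OF E_int S_int])
    finally show ?thesis .
  qed
  have mu: "Lmu f n c j = integral {-1..1} (\<lambda>x. sgn (e x) * chebU j x)" for j
    by (simp add: Lmu_def e_def s_def)
  have step2: "integral {-1..1} (\<lambda>x. sgn (e x) * r x) = (\<Sum>j\<le>n. d j * Lmu f n c j)"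
  proof -
    have "integral {-1..1} (\<lambda>x. sgn (e x) * r x) = integral {-1..1} (\<lambda>x. \<Sum>j\<le>n. d j * (sgn (e x) * chebU j x))"
      by (simp add: r sum_distrib_left algebra_simps)
    also have "\<dots> = (\<Sum>j\<le>n. integral {-1..1} (\<lambda>x. d j * (sgn (e x) * chebU j x)))"
      by (rule integral_sum) (auto intro: integrable_on_mult_right Sj_int)
    also have "\<dots> = (\<Sum>j\<le>n. d j * Lmu f n c j)"
      by (simp add: mu)
    finally show ?thesis .
  qed
  have mub: "\<bar>Lmu f n c j\<bar> \<le> m" if "j \<le> n" for j
    unfolding m_def using that by (intro Max_ge) auto
  have m0: "m \<ge> 0" using mub[of 0] by linarith
  have step3: "(\<Sum>j\<le>n. d j * Lmu f n c j) \<le> 2 / pi * (real n + 1) * m * R"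
  proof -
    have "(\<Sum>j\<le>n. d j * Lmu f n c j) \<le> (\<Sum>j\<le>n. (2 / pi * R) * m)"
    proof (rule sum_mono)
      fix j assume j: "j \<in> {..n}"
      have "d j * Lmu f n c j \<le> \<bar>d j\<bar> * \<bar>Lmu f n c j\<bar>" by (simp add: abs_mult[symmetric])
      also have "\<dots> \<le> (2 / pi * R) * m"
        using coeff_bound[OF r, of j] mub[of j] j unfolding R_def
        by (intro mult_mono) auto
      finally show "d j * Lmu f n c j \<le> (2 / pi * R) * m" .
    qed
    also have "\<dots> = 2 / pi * (real n + 1) * m * R" by simp
    finally show ?thesis .
  qed
  have Rb: "R \<le> E + A"
  proof -
    have "R \<le> integral {-1..1} (\<lambda>x. \<bar>f x - poly p x\<bar> + \<bar>e x\<bar>)"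
      unfolding R_def by (rule integral_le[OF R_int integrable_add[OF E_int A_int]])
        (auto simp: e_def pe)
    also have "\<dots> = E + A" unfolding Edef Adef by (rule integral_add[OF E_int A_int])
    finally show ?thesis .
  qed
  have E0: "E \<ge> 0" unfolding Edef by (rule integral_nonneg[OF E_int]) auto
  have K0: "2 / pi * (real n + 1) * m \<ge> 0" using m0 by simp
  have KM: "2 * (2 / pi * (real n + 1) * m) \<le> 2 / pi * (real n + 2)^2 * m"
  proof -
    have "2 * (real n + 1) \<le> (real n + 2)^2" by (simp add: power2_eq_square algebra_simps)
    then have "2 * (real n + 1) * (2 / pi * m) \<le> (real n + 2)^2 * (2 / pi * m)"
      using m0 by (intro mult_right_mono) auto
    then show ?thesis by (simp add: mult_ac)
  qed
  have "A \<le> 1 / (1 - 2 / pi * (real n + 2)^2 * m) * E"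
  proof (rule final_arith[OF _ Rb K0 KM _ E0])
    show "A \<le> E + 2 / pi * (real n + 1) * m * R" using step1 step2 step3 by linarith
    show "2 / pi * (real n + 2)^2 * m < 1" using assms(3) unfolding m_def .
  qed
  then show ?thesis unfolding A_def E_def m_def .
qed

end
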